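(* Let $\mathcal{X}$ be a finite set, $\mathcal{Y}=\{-1,1\}$, and $P_{X,Y}$ the empirical distribution of $n$ samples $\{(x_i,y_i)\}_{i=1}^n$ with $P_Y(-1)=P_Y(1)=\frac12$. Let $f:\mathcal{X}\to\mathbb{R}^d$ and $\lambda>0$. Define $\tilde L_{\mathsf{SVM}}(f;\lambda) = 1-\frac{1}{2\lambda}\left\|\mathbb{E}[f(X)Y]\right\|^2$, $M = \max_{x\in\mathcal{X}}\|\tilde f(x)\|$ with $\tilde f(x)=f(x)-\mathbb{E}[f(X)]$, and $\lambda_{\mathrm T} = M\left\|\mathbb{E}[f(X)Y]\right\|$. Then $$\tilde L_{\mathsf{SVM}}(f;\lambda)\le L^*_{\mathsf{SVM}}(f;\lambda)\le \tilde L_{\mathsf{SVM}}(f;\lambda) + \left(\frac{\lambda_{\mathrm T}}{\lambda}-1\right)^+ .$$ Moreover, when $\lambda\ge\lambda_{\mathrm T}$, $L^*_{\mathsf{SVM}}(f;\lambda) = \tilde L_{\mathsf{SVM}}(f;\lambda)$, which is achieved by $w_{\mathsf{SVM}} = \frac1\lambda\mathbb{E}[f(X)Y]$, $b_{\mathsf{SVM}} = -\langle w_{\mathsf{SVM}},\mathbb{E}[f(X)]\rangle$, and the resulting SVM prediction is $$\hat y_{\mathsf{SVM}}(x;f,\lambda) = \mathrm{sign}\left(\left\langle\mathbb{E}[\tilde f(X)Y],\tilde f(x)\right\rangle\right) = \arg\min_{y\in\mathcal{Y}}\left\|f(x)-\mathbb{E}[f(X)\mid Y=y]\right\|.$$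
   Context: Expectations are with respect to $P_{X,Y}$, where $P_{X,Y}(x,y)=\frac1n\sum_{i=1}^n\mathbb{1}\{x_i=x,y_i=y\}$. $x^+=\max\{0,x\}$. The hinge loss is $\ell_{\mathrm{hinge}}(y,z)=(1-yz)^+$. For $w\in\mathbb{R}^d$, $b\in\mathbb{R}$, the SVM loss is $L_{\mathsf{SVM}}(f,w,b;\lambda) = \mathbb{E}[\ell_{\mathrm{hinge}}(Y,\langle w,f(X)\rangle+b)] + \frac\lambda2\|w\|^2$; $(w_{\mathsf{SVM}},b_{\mathsf{SVM}})$ denotes a minimizer, $L^*_{\mathsf{SVM}}(f;\lambda)$ the minimum value, and the SVM prediction is $\hat y_{\mathsf{SVM}}(x;f,\lambda) = \mathrm{sign}(\langle w_{\mathsf{SVM}},f(x)\rangle + b_{\mathsf{SVM}})$. *)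

theory Defs
  imports "HOL-Analysis.Analysis"
begin

text \<open>Empirical distribution of n samples (xs i, ys i), i < n.
  Expectation of g(X,Y) under the empirical distribution: (1/n) * sum_{i<n} g(x_i,y_i).\<close>
definition emp_E :: "nat \<Rightarrow> (nat \<Rightarrow> 'b::real_vector) \<Rightarrow> 'b" where
  "emp_E n g = (1 / real n) *\<^sub>R (\<Sum>i<n. g i)"

definition emp_cond_E :: "nat \<Rightarrow> (nat \<Rightarrow> real) \<Rightarrow> real \<Rightarrow> (nat \<Rightarrow> 'b::real_vector) \<Rightarrow> 'b" where
  "emp_cond_E n ys c g = (1 / real (card {i. i < n \<and> ys i = c})) *\<^sub>R (\<Sum>i\<in>{i. i < n \<and> ys i = c}. g i)"

definition pos_part :: "real \<Rightarrow> real" where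
  "pos_part t = max 0 t"

definition hinge :: "real \<Rightarrow> real \<Rightarrow> real" where
  "hinge y z = pos_part (1 - y * z)"

definition L_SVM :: "nat \<Rightarrow> (nat \<Rightarrow> 'a) \<Rightarrow> (nat \<Rightarrow> real) \<Rightarrow> ('a \<Rightarrow> 'v::real_inner)
    \<Rightarrow> real \<Rightarrow> 'v \<Rightarrow> real \<Rightarrow> real" where
  "L_SVM n xs ys f lam w b =
     emp_E n (\<lambda>i. hinge (ys i) (inner w (f (xs i)) + b)) + lam / 2 * (norm w)\<^sup>2"

definition L_SVM_star :: "nat \<Rightarrow> (nat \<Rightarrow> 'a) \<Rightarrow> (nat \<Rightarrow> real) \<Rightarrow> ('a \<Rightarrow> 'v::real_inner)
    \<Rightarrow> real \<Rightarrow> real" where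
  "L_SVM_star n xs ys f lam = Inf ((\<lambda>(w, b). L_SVM n xs ys f lam w b) ` UNIV)"

definition EfY :: "nat \<Rightarrow> (nat \<Rightarrow> 'a) \<Rightarrow> (nat \<Rightarrow> real) \<Rightarrow> ('a \<Rightarrow> 'v::real_vector) \<Rightarrow> 'v" where
  "EfY n xs ys f = emp_E n (\<lambda>i. ys i *\<^sub>R f (xs i))"

definition L_tilde :: "nat \<Rightarrow> (nat \<Rightarrow> 'a) \<Rightarrow> (nat \<Rightarrow> real) \<Rightarrow> ('a \<Rightarrow> 'v::real_normed_vector)
    \<Rightarrow> real \<Rightarrow> real" where
  "L_tilde n xs ys f lam = 1 - 1 / (2 * lam) * (norm (EfY n xs ys f))\<^sup>2"

definition f_tilde :: "nat \<Rightarrow> (nat \<Rightarrow> 'a) \<Rightarrow> ('a \<Rightarrow> 'v::real_vector) \<Rightarrow> 'a \<Rightarrow> 'v" where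
  "f_tilde n xs f x = f x - emp_E n (\<lambda>i. f (xs i))"

definition M_const :: "'a set \<Rightarrow> nat \<Rightarrow> (nat \<Rightarrow> 'a) \<Rightarrow> ('a \<Rightarrow> 'v::real_normed_vector) \<Rightarrow> real" where
  "M_const X n xs f = Max ((\<lambda>x. norm (f_tilde n xs f x)) ` X)"

definition lambda_T :: "'a set \<Rightarrow> nat \<Rightarrow> (nat \<Rightarrow> 'a) \<Rightarrow> (nat \<Rightarrow> real) \<Rightarrow> ('a \<Rightarrow> 'v::real_normed_vector) \<Rightarrow> real" where
  "lambda_T X n xs ys f = M_const X n xs f * norm (EfY n xs ys f)"

definition nearest_class_mean :: "nat \<Rightarrow> (nat \<Rightarrow> 'a) \<Rightarrow> (nat \<Rightarrow> real) \<Rightarrow> ('a \<Rightarrow> 'v::real_normed_vector)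
    \<Rightarrow> 'a \<Rightarrow> real set" where
  "nearest_class_mean n xs ys f x =
     {y \<in> {-1, 1}. \<forall>y'\<in>{-1, 1}.
        norm (f x - emp_cond_E n ys y (\<lambda>i. f (xs i))) \<le> norm (f x - emp_cond_E n ys y' (\<lambda>i. f (xs i)))}"

end

theory Submission
  imports Defs
begin


lemma split_sums:
  fixes g :: "nat \<Rightarrow> 'b::real_vector"
  assumes "\<forall>i<n. ys i \<in> {-1, 1}"
  shows "(\<Sum>i<n. g i) = (\<Sum>i\<in>{i. i<n \<and> ys i = 1}. g i) + (\<Sum>i\<in>{i. i<n \<and> ys i = -1}. g i)"
    and "(\<Sum>i<n. ys i *\<^sub>R g i) = (\<Sum>i\<in>{i. i<n \<and> ys i = 1}. g i) - (\<Sum>i\<in>{i. i<n \<and> ys i = -1}. g i)"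
    and "card {i. i<n \<and> ys i = 1} + card {i. i<n \<and> ys i = -1} = n"
proof -
  let ?P = "{i. i<n \<and> ys i = 1}" let ?N = "{i. i<n \<and> ys i = -1}"
  have U: "{..<n} = ?P \<union> ?N" using assms by auto
  have D: "?P \<inter> ?N = {}" by auto
  have fP: "finite ?P" and fN: "finite ?N" by auto
  show "(\<Sum>i<n. g i) = (\<Sum>i\<in>?P. g i) + (\<Sum>i\<in>?N. g i)"
    unfolding U using sum.union_disjoint[OF fP fN D] by simp
  have "(\<Sum>i<n. ys i *\<^sub>R g i) = (\<Sum>i\<in>?P. ys i *\<^sub>R g i) + (\<Sum>i\<in>?N. ys i *\<^sub>R g i)"
    unfolding U by (rule sum.union_disjoint[OF fP fN D])
  also have "(\<Sum>i\<in>?P. ys i *\<^sub>R g i) = (\<Sum>i\<in>?P. g i)" by (rule sum.cong) auto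
  also have "(\<Sum>i\<in>?N. ys i *\<^sub>R g i) = - (\<Sum>i\<in>?N. g i)"
    by (simp add: sum_negf[symmetric])
  finally show "(\<Sum>i<n. ys i *\<^sub>R g i) = (\<Sum>i\<in>?P. g i) - (\<Sum>i\<in>?N. g i)" by simp
  show "card ?P + card ?N = n"
    using card_Un_disjoint[OF fP fN D] U by (metis card_lessThan)
qed

lemma sum_ys_zero:
  fixes ys :: "nat \<Rightarrow> real"
  assumes "\<forall>i<n. ys i \<in> {-1, 1}" "2 * card {i. i < n \<and> ys i = 1} = n"
  shows "(\<Sum>i<n. ys i) = 0"
proof -
  have "(\<Sum>i<n. ys i *\<^sub>R (1::real)) = real (card {i. i<n \<and> ys i = 1}) - real (card {i. i<n \<and> ys i = -1})"
    using split_sums(2)[OF assms(1), of "\<lambda>_. 1::real"] by simp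
  moreover have "card {i. i<n \<and> ys i = 1} + card {i. i<n \<and> ys i = -1} = n"
    using split_sums(3)[OF assms(1)] .
  ultimately show ?thesis using assms(2) by simp
qed

lemma norm_pm: fixes u v :: "'b::real_inner"
  shows "norm (u - v) \<le> norm (u + v) \<longleftrightarrow> 0 \<le> inner v u"
  unfolding norm_le by (simp add: inner_add inner_diff inner_commute)

lemma hinge_bound:
  assumes "y \<in> {-1, 1}" "\<bar>z\<bar> \<le> c"
  shows "hinge y z \<le> 1 - y * z + pos_part (c - 1)"
    and "c \<le> 1 \<Longrightarrow> hinge y z = 1 - y * z"
  using assms by (auto simp: hinge_def pos_part_def abs_le_iff)

lemma quad_lb: fixes w mu :: "'b::real_inner" assumes "lam > 0"
  shows "1 - 1 / (2 * lam) * (norm mu)\<^sup>2 \<le> 1 - inner w mu + lam / 2 * (norm w)\<^sup>2"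
proof -
  have "0 \<le> (norm (lam *\<^sub>R w - mu))\<^sup>2" by simp
  also have "\<dots> = lam^2 * (norm w)\<^sup>2 - 2 * lam * inner w mu + (norm mu)\<^sup>2"
    unfolding power2_norm_eq_inner by (simp add: inner_diff inner_commute power2_eq_square algebra_simps)
  finally have "0 \<le> lam^2 * (norm w)\<^sup>2 - 2 * lam * inner w mu + (norm mu)\<^sup>2" .
  hence "0 \<le> (lam^2 * (norm w)\<^sup>2 - 2 * lam * inner w mu + (norm mu)\<^sup>2) / (2*lam)"
    using assms by simp
  also have "\<dots> = lam / 2 * (norm w)\<^sup>2 - inner w mu + 1 / (2 * lam) * (norm mu)\<^sup>2"
    using assms by (simp add: field_simps power2_eq_square)
  finally show ?thesis by simp
qed


theorem theorem1:
  fixes X :: "'a set" and n :: nat and xs :: "nat \<Rightarrow> 'a" and ys :: "nat \<Rightarrow> real"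
    and f :: "'a \<Rightarrow> real ^ 'd" and lam :: real
  assumes "finite X"
    and "n > 0"
    and "\<forall>i<n. xs i \<in> X"
    and "\<forall>i<n. ys i \<in> {-1, 1}"
    and "2 * card {i. i < n \<and> ys i = 1} = n"
    and "lam > 0"
  shows "L_tilde n xs ys f lam \<le> L_SVM_star n xs ys f lam
    \<and> L_SVM_star n xs ys f lam
           \<le> L_tilde n xs ys f lam + pos_part (lambda_T X n xs ys f / lam - 1)
    \<and> (lam \<ge> lambda_T X n xs ys f \<longrightarrow>
           (let w0 = (1 / lam) *\<^sub>R EfY n xs ys f;
                b0 = - inner w0 (emp_E n (\<lambda>i. f (xs i)))
            in L_SVM_star n xs ys f lam = L_tilde n xs ys f lam
             \<and> L_SVM n xs ys f lam w0 b0 = L_SVM_star n xs ys f lam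
             \<and> (\<forall>x\<in>X.
                  sgn (inner w0 (f x) + b0)
                    = sgn (inner (emp_E n (\<lambda>i. ys i *\<^sub>R f_tilde n xs f (xs i))) (f_tilde n xs f x))
                \<and> (sgn (inner (emp_E n (\<lambda>i. ys i *\<^sub>R f_tilde n xs f (xs i))) (f_tilde n xs f x)) \<noteq> 0
                     \<longrightarrow> nearest_class_mean n xs ys f x
                           = {sgn (inner (emp_E n (\<lambda>i. ys i *\<^sub>R f_tilde n xs f (xs i))) (f_tilde n xs f x))})
                \<and> (sgn (inner (emp_E n (\<lambda>i. ys i *\<^sub>R f_tilde n xs f (xs i))) (f_tilde n xs f x)) = 0
                     \<longrightarrow> nearest_class_mean n xs ys f x = {-1, 1}))))"
  proof -
  note A = assms
  define mu where "mu = EfY n xs ys f"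
  define m where "m = emp_E n (\<lambda>i. f (xs i))"
  define w0 where "w0 = (1/lam) *\<^sub>R mu"
  define b0 where "b0 = - inner w0 m"
  define M where "M = M_const X n xs f"
  define LT where "LT = lambda_T X n xs ys f"
  have LT_eq: "LT = M * norm mu" unfolding LT_def lambda_T_def M_def mu_def ..
  have n0: "real n > 0" using A(2) by simp
  have sy: "(\<Sum>i<n. ys i) = 0" using sum_ys_zero[OF A(4) A(5)] .
  have lin: "(\<Sum>i<n. ys i * (inner w (f (xs i)) + b)) = real n * inner w mu" for w b
  proof -
    have "(\<Sum>i<n. ys i * (inner w (f (xs i)) + b)) = (\<Sum>i<n. inner w (ys i *\<^sub>R f (xs i))) + b * (\<Sum>i<n. ys i)"
      by (simp add: algebra_simps sum.distrib sum_distrib_left)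
    also have "\<dots> = inner w (\<Sum>i<n. ys i *\<^sub>R f (xs i))" using sy by (simp add: inner_sum_right)
    also have "\<dots> = real n * inner w mu" using n0
      by (simp add: mu_def EfY_def emp_E_def)
    finally show ?thesis .
  qed
  have LSVM: "L_SVM n xs ys f lam w b = (\<Sum>i<n. hinge (ys i) (inner w (f (xs i)) + b)) / real n + lam / 2 * (norm w)\<^sup>2" for w b
    unfolding L_SVM_def emp_E_def by simp
  have Lt: "L_tilde n xs ys f lam = 1 - 1 / (2 * lam) * (norm mu)\<^sup>2"
    unfolding L_tilde_def mu_def ..
  have key1: "L_tilde n xs ys f lam \<le> L_SVM n xs ys f lam w b" for w b
  proof -
    have "(\<Sum>i<n. 1 - ys i * (inner w (f (xs i)) + b)) \<le> (\<Sum>i<n. hinge (ys i) (inner w (f (xs i)) + b))"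
      by (rule sum_mono) (simp add: hinge_def pos_part_def)
    hence "real n - real n * inner w mu \<le> (\<Sum>i<n. hinge (ys i) (inner w (f (xs i)) + b))"
      by (simp add: sum_subtractf lin)
    hence "1 - inner w mu \<le> (\<Sum>i<n. hinge (ys i) (inner w (f (xs i)) + b)) / real n"
      using n0 by (simp add: field_simps)
    thus ?thesis unfolding LSVM Lt using quad_lb[OF A(6), of mu w] by linarith
  qed
  let ?S = "(\<lambda>(w, b). L_SVM n xs ys f lam w b) ` UNIV"
  have bdd: "bdd_below ?S" unfolding bdd_below_def using key1 by auto
  have part1: "L_tilde n xs ys f lam \<le> L_SVM_star n xs ys f lam"
    unfolding L_SVM_star_def by (rule cInf_greatest) (auto simp: key1)
  have star_le: "L_SVM_star n xs ys f lam \<le> L_SVM n xs ys f lam w b" for w b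
    unfolding L_SVM_star_def by (rule cInf_lower[OF _ bdd]) auto
  have ft: "inner w0 (f (xs i)) + b0 = inner w0 (f_tilde n xs f (xs i))" for i
    by (simp add: b0_def f_tilde_def m_def inner_diff_right)
  have Mge: "norm (f_tilde n xs f (xs i)) \<le> M" if "i < n" for i
    unfolding M_def M_const_def using A(1) A(3) that by (intro Max_ge) auto
  have zb: "\<bar>inner w0 (f (xs i)) + b0\<bar> \<le> LT / lam" if "i < n" for i
  proof -
    have "\<bar>inner w0 (f (xs i)) + b0\<bar> \<le> norm w0 * norm (f_tilde n xs f (xs i))"
      unfolding ft by (rule Cauchy_Schwarz_ineq2)
    also have "\<dots> \<le> norm w0 * M" using Mge[OF that] by (simp add: mult_left_mono)
    also have "\<dots> = LT / lam" using A(6) by (simp add: w0_def LT_eq)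
    finally show ?thesis .
  qed
  have ww: "inner w0 mu = (norm mu)\<^sup>2 / lam" "(norm w0)\<^sup>2 = (norm mu)\<^sup>2 / lam^2"
    using A(6) by (simp_all add: w0_def power_mult_distrib power_divide flip: power2_norm_eq_inner)
  have val: "lam / 2 * (norm w0)\<^sup>2 = 1 / (2 * lam) * (norm mu)\<^sup>2"
    using A(6) unfolding ww by (simp add: field_simps power2_eq_square)
  have part2: "L_SVM n xs ys f lam w0 b0 \<le> L_tilde n xs ys f lam + pos_part (LT / lam - 1)"
  proof -
    have "(\<Sum>i<n. hinge (ys i) (inner w0 (f (xs i)) + b0)) \<le> (\<Sum>i<n. 1 - ys i * (inner w0 (f (xs i)) + b0) + pos_part (LT / lam - 1))"
      by (rule sum_mono) (use hinge_bound(1) A(4) zb in auto)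
    also have "\<dots> = real n - real n * inner w0 mu + real n * pos_part (LT / lam - 1)"
      by (simp add: sum.distrib sum_subtractf lin)
    finally have "(\<Sum>i<n. hinge (ys i) (inner w0 (f (xs i)) + b0)) / real n \<le> 1 - inner w0 mu + pos_part (LT / lam - 1)"
      using n0 by (simp add: field_simps)
    thus ?thesis unfolding LSVM Lt val using ww(1) by (simp add: field_simps)
  qed
  have part3: "L_SVM n xs ys f lam w0 b0 = L_tilde n xs ys f lam" if "lam \<ge> LT"
  proof -
    have c1: "LT / lam \<le> 1" using that A(6) by simp
    have "(\<Sum>i<n. hinge (ys i) (inner w0 (f (xs i)) + b0)) = (\<Sum>i<n. 1 - ys i * (inner w0 (f (xs i)) + b0))"
    proof (rule sum.cong)
      fix i assume "i \<in> {..<n}"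
      thus "hinge (ys i) (inner w0 (f (xs i)) + b0) = 1 - ys i * (inner w0 (f (xs i)) + b0)"
      proof -
        have i: "i < n" using \<open>i \<in> {..<n}\<close> by simp
        show ?thesis by (rule hinge_bound(2)[OF _ zb[OF i] c1]) (use A(4) i in blast)
      qed
    qed simp
    also have "\<dots> = real n - real n * inner w0 mu"
      by (simp add: sum_subtractf lin)
    finally have "(\<Sum>i<n. hinge (ys i) (inner w0 (f (xs i)) + b0)) / real n = 1 - inner w0 mu"
      using n0 by (simp add: field_simps)
    thus ?thesis unfolding LSVM Lt val using ww(1) by (simp add: field_simps)
  qed
  have EYft: "emp_E n (\<lambda>i. ys i *\<^sub>R f_tilde n xs f (xs i)) = mu"
  proof -
    have "(\<Sum>i<n. ys i *\<^sub>R f_tilde n xs f (xs i)) = (\<Sum>i<n. ys i *\<^sub>R f (xs i)) - (\<Sum>i<n. ys i) *\<^sub>R m"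
      by (simp add: f_tilde_def m_def scaleR_diff_right sum_subtractf scaleR_sum_left)
    thus ?thesis using sy by (simp add: emp_E_def mu_def EfY_def)
  qed
  define SP where "SP = (\<Sum>i\<in>{i. i<n \<and> ys i = 1}. f (xs i))"
  define SN where "SN = (\<Sum>i\<in>{i. i<n \<and> ys i = -1}. f (xs i))"
  define k where "k = card {i. i<n \<and> ys i = 1}"
  have kN: "card {i. i<n \<and> ys i = -1} = k" using split_sums(3)[OF A(4)] A(5) k_def by simp
  have kpos: "real k > 0" using A(2) A(5) k_def by simp
  have nk: "real n = 2 * real k" using A(5) k_def by linarith
  have m_eq: "m = (1 / (2 * real k)) *\<^sub>R (SP + SN)"
    unfolding m_def emp_E_def SP_def SN_def using split_sums(1)[OF A(4), of "\<lambda>i. f (xs i)"] nk by simp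
  have mu_eq: "mu = (1 / (2 * real k)) *\<^sub>R (SP - SN)"
    unfolding mu_def EfY_def emp_E_def SP_def SN_def using split_sums(2)[OF A(4), of "\<lambda>i. f (xs i)"] nk by simp
  have cp: "emp_cond_E n ys 1 (\<lambda>i. f (xs i)) = m + mu"
  proof -
    have e: "(SP + SN) + (SP - SN) = 2 *\<^sub>R SP" by (simp add: scaleR_2 algebra_simps)
    have "m + mu = (1 / (2 * real k)) *\<^sub>R (2 *\<^sub>R SP)"
      unfolding m_eq mu_eq e[symmetric] by (rule scaleR_add_right[symmetric])
    also have "\<dots> = (1 / real k) *\<^sub>R SP" using kpos by simp
    finally show ?thesis unfolding emp_cond_E_def SP_def k_def by simp
  qed
  have cm: "emp_cond_E n ys (-1) (\<lambda>i. f (xs i)) = m - mu"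
  proof -
    have e: "(SP + SN) - (SP - SN) = 2 *\<^sub>R SN" by (simp add: scaleR_2 algebra_simps)
    have "m - mu = (1 / (2 * real k)) *\<^sub>R (2 *\<^sub>R SN)"
      unfolding m_eq mu_eq e[symmetric] by (rule scaleR_diff_right[symmetric])
    also have "\<dots> = (1 / real k) *\<^sub>R SN" using kpos by simp
    finally show ?thesis unfolding emp_cond_E_def SN_def kN by simp
  qed
  have ncm: "nearest_class_mean n xs ys f x = {y \<in> {-1, 1}. (y = 1 \<longrightarrow> 0 \<le> inner mu (f_tilde n xs f x)) \<and> (y = -1 \<longrightarrow> inner mu (f_tilde n xs f x) \<le> 0)}" for x
  proof -
    define u where "u = f_tilde n xs f x"
    have e1: "f x - (m + mu) = u - mu" and e2: "f x - (m - mu) = u + mu"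
      by (simp_all add: u_def f_tilde_def m_def algebra_simps)
    have "norm (u - mu) \<le> norm (u + mu) \<longleftrightarrow> 0 \<le> inner mu u" by (rule norm_pm)
    moreover have "norm (u + mu) \<le> norm (u - mu) \<longleftrightarrow> inner mu u \<le> 0"
      using norm_pm[of u "-mu"] by simp
    ultimately show ?thesis
      unfolding nearest_class_mean_def u_def[symmetric] by (auto simp: cp cm e1 e2)
  qed
  have sgnpart: "\<forall>x\<in>X.
                  sgn (inner w0 (f x) + b0)
                    = sgn (inner (emp_E n (\<lambda>i. ys i *\<^sub>R f_tilde n xs f (xs i))) (f_tilde n xs f x))
                \<and> (sgn (inner (emp_E n (\<lambda>i. ys i *\<^sub>R f_tilde n xs f (xs i))) (f_tilde n xs f x)) \<noteq> 0
                     \<longrightarrow> nearest_class_mean n xs ys f x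
                           = {sgn (inner (emp_E n (\<lambda>i. ys i *\<^sub>R f_tilde n xs f (xs i))) (f_tilde n xs f x))})
                \<and> (sgn (inner (emp_E n (\<lambda>i. ys i *\<^sub>R f_tilde n xs f (xs i))) (f_tilde n xs f x)) = 0
                     \<longrightarrow> nearest_class_mean n xs ys f x = {-1, 1})"
  proof
    fix x assume "x \<in> X"
    define t where "t = inner mu (f_tilde n xs f x)"
    have "inner w0 (f x) + b0 = t / lam"
      by (simp add: t_def w0_def b0_def f_tilde_def m_def inner_diff_right diff_divide_distrib)
    hence s1: "sgn (inner w0 (f x) + b0) = sgn t" using A(6) by (simp add: sgn_real_def zero_less_divide_iff divide_less_0_iff)
    show "sgn (inner w0 (f x) + b0)
                    = sgn (inner (emp_E n (\<lambda>i. ys i *\<^sub>R f_tilde n xs f (xs i))) (f_tilde n xs f x))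
                \<and> (sgn (inner (emp_E n (\<lambda>i. ys i *\<^sub>R f_tilde n xs f (xs i))) (f_tilde n xs f x)) \<noteq> 0
                     \<longrightarrow> nearest_class_mean n xs ys f x
                           = {sgn (inner (emp_E n (\<lambda>i. ys i *\<^sub>R f_tilde n xs f (xs i))) (f_tilde n xs f x))})
                \<and> (sgn (inner (emp_E n (\<lambda>i. ys i *\<^sub>R f_tilde n xs f (xs i))) (f_tilde n xs f x)) = 0
                     \<longrightarrow> nearest_class_mean n xs ys f x = {-1, 1})"
      unfolding EYft s1 ncm t_def[symmetric]
      by (cases "t > 0"; cases "t < 0") (auto simp: sgn_real_def)
  qed
  show ?thesis
  proof (intro conjI impI)
    show "L_tilde n xs ys f lam \<le> L_SVM_star n xs ys f lam" by (rule part1)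
    show "L_SVM_star n xs ys f lam \<le> L_tilde n xs ys f lam + pos_part (lambda_T X n xs ys f / lam - 1)"
      using star_le[of w0 b0] part2 LT_def by simp
    assume h: "lambda_T X n xs ys f \<le> lam"
    have e: "L_SVM_star n xs ys f lam = L_tilde n xs ys f lam"
      using star_le[of w0 b0] part3 h part1 LT_def by simp
    show "let w0 = (1 / lam) *\<^sub>R EfY n xs ys f; b0 = - inner w0 (emp_E n (\<lambda>i. f (xs i)))
            in L_SVM_star n xs ys f lam = L_tilde n xs ys f lam
             \<and> L_SVM n xs ys f lam w0 b0 = L_SVM_star n xs ys f lam
             \<and> (\<forall>x\<in>X.
                  sgn (inner w0 (f x) + b0)
                    = sgn (inner (emp_E n (\<lambda>i. ys i *\<^sub>R f_tilde n xs f (xs i))) (f_tilde n xs f x))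
                \<and> (sgn (inner (emp_E n (\<lambda>i. ys i *\<^sub>R f_tilde n xs f (xs i))) (f_tilde n xs f x)) \<noteq> 0
                     \<longrightarrow> nearest_class_mean n xs ys f x
                           = {sgn (inner (emp_E n (\<lambda>i. ys i *\<^sub>R f_tilde n xs f (xs i))) (f_tilde n xs f x))})
                \<and> (sgn (inner (emp_E n (\<lambda>i. ys i *\<^sub>R f_tilde n xs f (xs i))) (f_tilde n xs f x)) = 0
                     \<longrightarrow> nearest_class_mean n xs ys f x = {-1, 1}))"
      unfolding Let_def mu_def[symmetric] m_def[symmetric] w0_def[symmetric] b0_def[symmetric]
      using e part3 h LT_def sgnpart by simp
  qed
qed

end
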